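(* Let $\mathbb{E}$ be a finitely complete category, $\Sigma$ a point-congruous class of split epimorphisms, and suppose $\mathbb{E}$ is a $\Sigma$-Mal'tsev category. Let $f\colon X\to Y$ and $g\colon Y\to Z$ be morphisms. If $g\circ f$ and $g$ are $\Sigma$-special, then $f$ is $\Sigma$-special.
   Context: A split epimorphism is a pair $(f,s)$ with $fs=1$. A class $\Sigma$ of split epimorphisms is fibrational if it contains all split epimorphisms $(f,s)$ with $f$ invertible and is stable under pullback along any morphism; it is point-congruous if moreover the full subcategory $\Sigma(\mathbb{E})$ of the category $\mathrm{Pt}(\mathbb{E})$ of split epimorphisms (with commuting squares as morphisms) is closed under finite limits in $\mathrm{Pt}(\mathbb{E})$. A pair of morphisms with common codomain $W$ is jointly extremally epic if it factors jointly through no non-invertible monomorphism into $W$. $\mathbb{E}$ is $\Sigma$-Mal'tsev if for every split epimorphism $(f,s)\colon X\rightleftarrows Y$ in $\Sigma$ and every split epimorphism $(g,t)$ with $g\colon Y'\to Y$, letting $X'=Y'\times_YX$, $s'=(1_{Y'},sg)$, $\bar t=(tf,1_X)$, the pair $(s',\bar t)$ is jointly extremally epic. A $\Sigma$-relation is a reflexive relation $(d_0,d_1)\colon S\rightarrowtail X\times X$ with reflexivity $s_0$ such that $(d_0,s_0)\in\Sigma$. A morphism $f$ is $\Sigma$-special when its kernel relation $R[f]$ is a $\Sigma$-relation. *)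

theory Defs
  imports Main
begin

record ('o,'m) cat =
  Obj :: "'o set"
  Arr :: "'m set"
  Dom :: "'m \<Rightarrow> 'o"
  Cod :: "'m \<Rightarrow> 'o"
  Idt :: "'o \<Rightarrow> 'm"
  Cmp :: "'m \<Rightarrow> 'm \<Rightarrow> 'm"   (* Cmp C g f = g o f *)

definition hom :: "('o,'m) cat \<Rightarrow> 'm \<Rightarrow> 'o \<Rightarrow> 'o \<Rightarrow> bool" where
  "hom C f X Y \<longleftrightarrow> f \<in> Arr C \<and> Dom C f = X \<and> Cod C f = Y"

definition category :: "('o,'m) cat \<Rightarrow> bool" where
  "category C \<longleftrightarrow>
     (\<forall>f\<in>Arr C. Dom C f \<in> Obj C \<and> Cod C f \<in> Obj C) \<and>
     (\<forall>X\<in>Obj C. hom C (Idt C X) X X) \<and>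
     (\<forall>f g. f \<in> Arr C \<and> g \<in> Arr C \<and> Cod C f = Dom C g
        \<longrightarrow> hom C (Cmp C g f) (Dom C f) (Cod C g)) \<and>
     (\<forall>f\<in>Arr C. Cmp C f (Idt C (Dom C f)) = f \<and> Cmp C (Idt C (Cod C f)) f = f) \<and>
     (\<forall>f g h. f \<in> Arr C \<and> g \<in> Arr C \<and> h \<in> Arr C \<and> Cod C f = Dom C g \<and> Cod C g = Dom C h
        \<longrightarrow> Cmp C h (Cmp C g f) = Cmp C (Cmp C h g) f)"

definition mono :: "('o,'m) cat \<Rightarrow> 'm \<Rightarrow> bool" where
  "mono C m \<longleftrightarrow> m \<in> Arr C \<and>
     (\<forall>a b. a \<in> Arr C \<and> b \<in> Arr C \<and> Cod C a = Dom C m \<and> Cod C b = Dom C m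
        \<and> Dom C a = Dom C b \<and> Cmp C m a = Cmp C m b \<longrightarrow> a = b)"

definition iso :: "('o,'m) cat \<Rightarrow> 'm \<Rightarrow> bool" where
  "iso C f \<longleftrightarrow> f \<in> Arr C \<and>
     (\<exists>g. hom C g (Cod C f) (Dom C f) \<and> Cmp C g f = Idt C (Dom C f)
          \<and> Cmp C f g = Idt C (Cod C f))"

definition terminal :: "('o,'m) cat \<Rightarrow> 'o \<Rightarrow> bool" where
  "terminal C T \<longleftrightarrow> T \<in> Obj C \<and> (\<forall>X\<in>Obj C. \<exists>!u. hom C u X T)"

definition pullback :: "('o,'m) cat \<Rightarrow> 'm \<Rightarrow> 'm \<Rightarrow> 'o \<Rightarrow> 'm \<Rightarrow> 'm \<Rightarrow> bool" where
  "pullback C f g P p1 p2 \<longleftrightarrow>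
     f \<in> Arr C \<and> g \<in> Arr C \<and> Cod C f = Cod C g \<and>
     hom C p1 P (Dom C f) \<and> hom C p2 P (Dom C g) \<and> Cmp C f p1 = Cmp C g p2 \<and>
     (\<forall>Q q1 q2. hom C q1 Q (Dom C f) \<and> hom C q2 Q (Dom C g) \<and> Cmp C f q1 = Cmp C g q2
        \<longrightarrow> (\<exists>!u. hom C u Q P \<and> Cmp C p1 u = q1 \<and> Cmp C p2 u = q2))"

definition finitely_complete :: "('o,'m) cat \<Rightarrow> bool" where
  "finitely_complete C \<longleftrightarrow> category C \<and> (\<exists>T. terminal C T) \<and>
     (\<forall>f g. f \<in> Arr C \<and> g \<in> Arr C \<and> Cod C f = Cod C g
        \<longrightarrow> (\<exists>P p1 p2. pullback C f g P p1 p2))"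

definition split_epi :: "('o,'m) cat \<Rightarrow> 'm \<times> 'm \<Rightarrow> bool" where
  "split_epi C p \<longleftrightarrow> (case p of (f, s) \<Rightarrow>
     f \<in> Arr C \<and> hom C s (Cod C f) (Dom C f) \<and> Cmp C f s = Idt C (Cod C f))"

text \<open>Pt(E): objects are split epis (f,s); a morphism (P,Q,(a,b)) is a commuting square
  with a between the domains and b between the codomains, commuting with both f and s.\<close>
definition Pt :: "('o,'m) cat \<Rightarrow> ('m \<times> 'm, ('m \<times> 'm) \<times> ('m \<times> 'm) \<times> ('m \<times> 'm)) cat" where
  "Pt C = \<lparr> Obj = {p. split_epi C p},
            Arr = {(P, Q, (a, b)). split_epi C P \<and> split_epi C Q \<and>
                     hom C a (Dom C (fst P)) (Dom C (fst Q)) \<and>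
                     hom C b (Cod C (fst P)) (Cod C (fst Q)) \<and>
                     Cmp C (fst Q) a = Cmp C b (fst P) \<and>
                     Cmp C a (snd P) = Cmp C (snd Q) b},
            Dom = (\<lambda>h. fst h),
            Cod = (\<lambda>h. fst (snd h)),
            Idt = (\<lambda>P. (P, P, (Idt C (Dom C (fst P)), Idt C (Cod C (fst P))))),
            Cmp = (\<lambda>k h. (fst h, fst (snd k),
                     (Cmp C (fst (snd (snd k))) (fst (snd (snd h))),
                      Cmp C (snd (snd (snd k))) (snd (snd (snd h)))))) \<rparr>"

definition fibrational :: "('o,'m) cat \<Rightarrow> ('m \<times> 'm) set \<Rightarrow> bool" where
  "fibrational C S \<longleftrightarrow>
     S \<subseteq> {p. split_epi C p} \<and>
     (\<forall>f s. split_epi C (f, s) \<and> iso C f \<longrightarrow> (f, s) \<in> S) \<and>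
     (\<forall>f s v P p1 p2 s'. (f, s) \<in> S \<and> v \<in> Arr C \<and> Cod C v = Cod C f \<and>
        pullback C v f P p1 p2 \<and> hom C s' (Dom C v) P \<and>
        Cmp C p1 s' = Idt C (Dom C v) \<and> Cmp C p2 s' = Cmp C s v
        \<longrightarrow> (p1, s') \<in> S)"

text \<open>Closure of the full subcategory S(E) of Pt(E) under finite limits in Pt(E),
  i.e. under terminal objects and pullbacks of Pt(E).\<close>
definition point_congruous :: "('o,'m) cat \<Rightarrow> ('m \<times> 'm) set \<Rightarrow> bool" where
  "point_congruous C S \<longleftrightarrow> fibrational C S \<and>
     (\<forall>T. terminal (Pt C) T \<longrightarrow> T \<in> S) \<and>
     (\<forall>\<alpha> \<beta> P \<pi>1 \<pi>2. pullback (Pt C) \<alpha> \<beta> P \<pi>1 \<pi>2 \<and>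
        Dom (Pt C) \<alpha> \<in> S \<and> Dom (Pt C) \<beta> \<in> S \<and> Cod (Pt C) \<alpha> \<in> S \<longrightarrow> P \<in> S)"

definition jointly_extremally_epic :: "('o,'m) cat \<Rightarrow> 'm \<Rightarrow> 'm \<Rightarrow> bool" where
  "jointly_extremally_epic C a b \<longleftrightarrow> a \<in> Arr C \<and> b \<in> Arr C \<and> Cod C a = Cod C b \<and>
     (\<forall>m a' b'. mono C m \<and> Cod C m = Cod C a \<and>
        hom C a' (Dom C a) (Dom C m) \<and> hom C b' (Dom C b) (Dom C m) \<and>
        Cmp C m a' = a \<and> Cmp C m b' = b \<longrightarrow> iso C m)"

text \<open>Sigma-Mal'tsev: for (f,s) : X <-> Y in S and a split epi (g,t) with g : Y' -> Y,
  with X' = Y' x_Y X (projections p1 : X' -> Y', p2 : X' -> X),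
  s' = (1, s g) : Y' -> X' and tb = (t f, 1) : X -> X', the pair (s', tb) is
  jointly extremally epic.\<close>
definition sigma_maltsev :: "('o,'m) cat \<Rightarrow> ('m \<times> 'm) set \<Rightarrow> bool" where
  "sigma_maltsev C S \<longleftrightarrow>
     (\<forall>f s g t P p1 p2 s' tb. (f, s) \<in> S \<and> split_epi C (g, t) \<and> Cod C g = Cod C f \<and>
        pullback C g f P p1 p2 \<and>
        hom C s' (Dom C g) P \<and> Cmp C p1 s' = Idt C (Dom C g) \<and> Cmp C p2 s' = Cmp C s g \<and>
        hom C tb (Dom C f) P \<and> Cmp C p1 tb = Cmp C t f \<and> Cmp C p2 tb = Idt C (Dom C f)
        \<longrightarrow> jointly_extremally_epic C s' tb)"

definition jointly_monic :: "('o,'m) cat \<Rightarrow> 'm \<Rightarrow> 'm \<Rightarrow> bool" where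
  "jointly_monic C d0 d1 \<longleftrightarrow> d0 \<in> Arr C \<and> d1 \<in> Arr C \<and> Dom C d0 = Dom C d1 \<and>
     (\<forall>a b. a \<in> Arr C \<and> b \<in> Arr C \<and> Dom C a = Dom C b \<and> Cod C a = Dom C d0 \<and>
        Cod C b = Dom C d0 \<and> Cmp C d0 a = Cmp C d0 b \<and> Cmp C d1 a = Cmp C d1 b \<longrightarrow> a = b)"

definition sigma_relation ::
    "('o,'m) cat \<Rightarrow> ('m \<times> 'm) set \<Rightarrow> 'o \<Rightarrow> 'o \<Rightarrow> 'm \<Rightarrow> 'm \<Rightarrow> 'm \<Rightarrow> bool" where
  "sigma_relation C S X R d0 d1 s0 \<longleftrightarrow>
     hom C d0 R X \<and> hom C d1 R X \<and> jointly_monic C d0 d1 \<and>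
     hom C s0 X R \<and> Cmp C d0 s0 = Idt C X \<and> Cmp C d1 s0 = Idt C X \<and> (d0, s0) \<in> S"

definition sigma_special :: "('o,'m) cat \<Rightarrow> ('m \<times> 'm) set \<Rightarrow> 'm \<Rightarrow> bool" where
  "sigma_special C S f \<longleftrightarrow> f \<in> Arr C \<and>
     (\<forall>R d0 d1 s0. pullback C f f R d0 d1 \<and> hom C s0 (Dom C f) R \<and>
        Cmp C d0 s0 = Idt C (Dom C f) \<and> Cmp C d1 s0 = Idt C (Dom C f)
        \<longrightarrow> sigma_relation C S (Dom C f) R d0 d1 s0)"

end

theory Submission imports Defs begin

lemma catD:
  assumes "category C"
  shows "\<And>f. f\<in>Arr C \<Longrightarrow> Dom C f \<in> Obj C \<and> Cod C f \<in> Obj C"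
    and "\<And>X. X\<in>Obj C \<Longrightarrow> hom C (Idt C X) X X"
    and "\<And>f g. f \<in> Arr C \<Longrightarrow> g \<in> Arr C \<Longrightarrow> Cod C f = Dom C g
        \<Longrightarrow> hom C (Cmp C g f) (Dom C f) (Cod C g)"
    and "\<And>f. f\<in>Arr C \<Longrightarrow> Cmp C f (Idt C (Dom C f)) = f"
    and "\<And>f. f\<in>Arr C \<Longrightarrow> Cmp C (Idt C (Cod C f)) f = f"
    and "\<And>f g h. f \<in> Arr C \<Longrightarrow> g \<in> Arr C \<Longrightarrow> h \<in> Arr C \<Longrightarrow> Cod C f = Dom C g \<Longrightarrow> Cod C g = Dom C h
        \<Longrightarrow> Cmp C h (Cmp C g f) = Cmp C (Cmp C h g) f"
proof -
  note H = assms[unfolded category_def]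
  note H1 = conjunct1[OF H] and H2 = conjunct1[OF conjunct2[OF H]]
    and H3 = conjunct1[OF conjunct2[OF conjunct2[OF H]]]
    and H4 = conjunct1[OF conjunct2[OF conjunct2[OF conjunct2[OF H]]]]
    and H5 = conjunct2[OF conjunct2[OF conjunct2[OF conjunct2[OF H]]]]
  show "\<And>f. f\<in>Arr C \<Longrightarrow> Dom C f \<in> Obj C \<and> Cod C f \<in> Obj C" using H1 by simp
  show "\<And>X. X\<in>Obj C \<Longrightarrow> hom C (Idt C X) X X" using H2 by simp
  show "\<And>f g. f \<in> Arr C \<Longrightarrow> g \<in> Arr C \<Longrightarrow> Cod C f = Dom C g
        \<Longrightarrow> hom C (Cmp C g f) (Dom C f) (Cod C g)" using H3 by simp
  show "\<And>f. f\<in>Arr C \<Longrightarrow> Cmp C f (Idt C (Dom C f)) = f" using H4 by simp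
  show "\<And>f. f\<in>Arr C \<Longrightarrow> Cmp C (Idt C (Cod C f)) f = f" using H4 by simp
  show "\<And>f g h. f \<in> Arr C \<Longrightarrow> g \<in> Arr C \<Longrightarrow> h \<in> Arr C \<Longrightarrow> Cod C f = Dom C g \<Longrightarrow> Cod C g = Dom C h
        \<Longrightarrow> Cmp C h (Cmp C g f) = Cmp C (Cmp C h g) f" using H5 by simp
qed

lemma homD: "hom C f A B \<Longrightarrow> f \<in> Arr C \<and> Dom C f = A \<and> Cod C f = B"
  by (simp add: hom_def)

lemma comp_hom: "category C \<Longrightarrow> hom C f A B \<Longrightarrow> hom C g B D \<Longrightarrow> hom C (Cmp C g f) A D"
proof -
  assume c: "category C" and hf: "hom C f A B" and hg: "hom C g B D"
  from hf hg have a: "f \<in> Arr C" "g \<in> Arr C" "Cod C f = Dom C g" "Dom C f = A" "Cod C g = D"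
    by (simp_all add: hom_def)
  have "hom C (Cmp C g f) (Dom C f) (Cod C g)" by (rule catD(3)[OF c a(1,2,3)])
  then show ?thesis by (simp only: a(4,5))
qed

lemma hom_obj: "category C \<Longrightarrow> hom C f A B \<Longrightarrow> A \<in> Obj C \<and> B \<in> Obj C"
proof -
  assume c: "category C" and hf: "hom C f A B"
  from hf have a: "f \<in> Arr C" "Dom C f = A" "Cod C f = B" by (simp_all add: hom_def)
  have "Dom C f \<in> Obj C \<and> Cod C f \<in> Obj C" by (rule catD(1)[OF c a(1)])
  then show ?thesis by (simp only: a(2,3))
qed

lemma id_hom: "category C \<Longrightarrow> A \<in> Obj C \<Longrightarrow> hom C (Idt C A) A A"
  by (rule catD(2))

lemma idr: "category C \<Longrightarrow> hom C f A B \<Longrightarrow> Cmp C f (Idt C A) = f"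
proof -
  assume c: "category C" and hf: "hom C f A B"
  from hf have a: "f \<in> Arr C" "Dom C f = A" by (simp_all add: hom_def)
  have "Cmp C f (Idt C (Dom C f)) = f" by (rule catD(4)[OF c a(1)])
  then show ?thesis by (simp only: a(2))
qed

lemma idl: "category C \<Longrightarrow> hom C f A B \<Longrightarrow> Cmp C (Idt C B) f = f"
proof -
  assume c: "category C" and hf: "hom C f A B"
  from hf have a: "f \<in> Arr C" "Cod C f = B" by (simp_all add: hom_def)
  have "Cmp C (Idt C (Cod C f)) f = f" by (rule catD(5)[OF c a(1)])
  then show ?thesis by (simp only: a(2))
qed

lemma assoc: "category C \<Longrightarrow> hom C f A B \<Longrightarrow> hom C g B D \<Longrightarrow> hom C h D E \<Longrightarrow>
   Cmp C h (Cmp C g f) = Cmp C (Cmp C h g) f"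
proof -
  assume c: "category C" and hf: "hom C f A B" and hg: "hom C g B D" and hh: "hom C h D E"
  from hf hg hh have a: "f \<in> Arr C" "g \<in> Arr C" "h \<in> Arr C" "Cod C f = Dom C g" "Cod C g = Dom C h"
    by (simp_all add: hom_def)
  show ?thesis by (rule catD(6)[OF c a])
qed

lemma pb_uniq: "pullback C f g P p1 p2 \<Longrightarrow> hom C a W P \<Longrightarrow> hom C b W P \<Longrightarrow>
   Cmp C p1 a = Cmp C p1 b \<Longrightarrow> Cmp C p2 a = Cmp C p2 b \<Longrightarrow> category C \<Longrightarrow> a = b"
proof -
  assume pb: "pullback C f g P p1 p2" and a: "hom C a W P" and b: "hom C b W P"
    and e1: "Cmp C p1 a = Cmp C p1 b" and e2: "Cmp C p2 a = Cmp C p2 b" and c: "category C"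
  from pb have h1: "hom C p1 P (Dom C f)" and h2: "hom C p2 P (Dom C g)" and sq: "Cmp C f p1 = Cmp C g p2"
    and f: "f \<in> Arr C" and g: "g \<in> Arr C"
    and U: "\<forall>Q q1 q2. hom C q1 Q (Dom C f) \<and> hom C q2 Q (Dom C g) \<and> Cmp C f q1 = Cmp C g q2
        \<longrightarrow> (\<exists>!u. hom C u Q P \<and> Cmp C p1 u = q1 \<and> Cmp C p2 u = q2)"
    unfolding pullback_def by blast+
  have hf: "hom C f (Dom C f) (Cod C f)" using f by (simp add: hom_def)
  have hg: "hom C g (Dom C g) (Cod C g)" using g by (simp add: hom_def)
  have q1: "hom C (Cmp C p1 a) W (Dom C f)" using comp_hom[OF c a h1] .
  have q2: "hom C (Cmp C p2 a) W (Dom C g)" using comp_hom[OF c a h2] .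
  have "Cmp C f (Cmp C p1 a) = Cmp C (Cmp C f p1) a" using assoc[OF c a h1 hf] .
  also have "\<dots> = Cmp C (Cmp C g p2) a" by (simp only: sq)
  also have "\<dots> = Cmp C g (Cmp C p2 a)" using assoc[OF c a h2 hg] by (rule sym)
  finally have eq: "Cmp C f (Cmp C p1 a) = Cmp C g (Cmp C p2 a)" .
  have "\<exists>!u. hom C u W P \<and> Cmp C p1 u = Cmp C p1 a \<and> Cmp C p2 u = Cmp C p2 a"
    by (rule U[rule_format, OF conjI[OF q1 conjI[OF q2 eq]]])
  then have U1: "\<exists>!u. hom C u W P \<and> Cmp C p1 u = Cmp C p1 a \<and> Cmp C p2 u = Cmp C p2 a" .
  have "(THE u. hom C u W P \<and> Cmp C p1 u = Cmp C p1 a \<and> Cmp C p2 u = Cmp C p2 a) = a"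
    by (rule the1_equality[OF U1]) (simp add: a)
  moreover have "(THE u. hom C u W P \<and> Cmp C p1 u = Cmp C p1 a \<and> Cmp C p2 u = Cmp C p2 a) = b"
    by (rule the1_equality[OF U1]) (simp add: b e1 e2)
  ultimately show "a = b" by simp
qed

lemma pb_ex: "pullback C f g P p1 p2 \<Longrightarrow> hom C q1 W (Dom C f) \<Longrightarrow> hom C q2 W (Dom C g) \<Longrightarrow>
   Cmp C f q1 = Cmp C g q2 \<Longrightarrow> \<exists>u. hom C u W P \<and> Cmp C p1 u = q1 \<and> Cmp C p2 u = q2"
  unfolding pullback_def by blast

lemma pb_homs: "pullback C f g P p1 p2 \<Longrightarrow> hom C p1 P (Dom C f) \<and> hom C p2 P (Dom C g) \<and>
   Cmp C f p1 = Cmp C g p2 \<and> hom C f (Dom C f) (Cod C f) \<and> hom C g (Dom C g) (Cod C f)"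
  unfolding pullback_def hom_def by auto


lemma hom_Pt: "hom (Pt C) u Q P \<longleftrightarrow> u \<in> Arr (Pt C) \<and> fst u = Q \<and> fst (snd u) = P"
  by (simp add: hom_def Pt_def)

lemma Pt_arr: "((P1,P2), (Q1,Q2), (a, b)) \<in> Arr (Pt C) \<longleftrightarrow>
   split_epi C (P1,P2) \<and> split_epi C (Q1,Q2) \<and>
   hom C a (Dom C P1) (Dom C Q1) \<and> hom C b (Cod C P1) (Cod C Q1) \<and>
   Cmp C Q1 a = Cmp C b P1 \<and> Cmp C a P2 = Cmp C Q2 b"
  unfolding Pt_def by (simp del: split_epi_def)

lemma Pt_cmp: "Cmp (Pt C) (Q, R, (a', b')) (P, Q', (a, b)) = (P, R, (Cmp C a' a, Cmp C b' b))"
  by (simp add: Pt_def)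

lemma Pt_dom: "Dom (Pt C) u = fst u" and Pt_cod: "Cod (Pt C) u = fst (snd u)"
  by (simp_all add: Pt_def)

theorem proposition6p4:
  fixes C :: "('o,'m) cat" and S :: "('m \<times> 'm) set"
    and f g :: 'm and X Y Z :: 'o
  assumes "finitely_complete C"
    and "point_congruous C S"
    and "sigma_maltsev C S"
    and "hom C f X Y"
    and "hom C g Y Z"
    and "sigma_special C S (Cmp C g f)"
    and "sigma_special C S g"
  shows "sigma_special C S f"
proof -
  have c: "category C" using assms(1) finitely_complete_def by blast
  have hf: "hom C f X Y" and hg: "hom C g Y Z" by fact+
  have fD: "f \<in> Arr C" "Dom C f = X" "Cod C f = Y" using homD[OF hf] by auto
  have gD: "g \<in> Arr C" "Dom C g = Y" "Cod C g = Z" using homD[OF hg] by auto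
  have XO: "X \<in> Obj C" and YO: "Y \<in> Obj C" using hom_obj[OF c hf] by auto
  define h where "h = Cmp C g f"
  have hh: "hom C h X Z" unfolding h_def using comp_hom[OF c hf hg] .
  have hD: "h \<in> Arr C" "Dom C h = X" "Cod C h = Z" using homD[OF hh] by auto
  have iX: "hom C (Idt C X) X X" using id_hom[OF c XO] .
  have iY: "hom C (Idt C Y) Y Y" using id_hom[OF c YO] .
  obtain K k0 k1 where pbK: "pullback C h h K k0 k1"
    using assms(1) hD unfolding finitely_complete_def by blast
  have hk0: "hom C k0 K X" and hk1: "hom C k1 K X" and sqK: "Cmp C h k0 = Cmp C h k1"
    using pb_homs[OF pbK] hD by auto
  obtain t0 where ht0: "hom C t0 X K" and t0a: "Cmp C k0 t0 = Idt C X" and t0b: "Cmp C k1 t0 = Idt C X"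
    using pb_ex[OF pbK, of "Idt C X" X "Idt C X"] hD iX by auto
  have At: "sigma_relation C S X K k0 k1 t0"
  proof -
    have "sigma_special C S h" using assms(6) h_def by simp
    then have "\<forall>R d0 d1 s0. pullback C h h R d0 d1 \<and> hom C s0 (Dom C h) R \<and>
        Cmp C d0 s0 = Idt C (Dom C h) \<and> Cmp C d1 s0 = Idt C (Dom C h)
        \<longrightarrow> sigma_relation C S (Dom C h) R d0 d1 s0" unfolding sigma_special_def by blast
    then show ?thesis using pbK ht0 t0a t0b hD(2) by metis
  qed
  have AS: "(k0, t0) \<in> S" using At unfolding sigma_relation_def by blast
  obtain G e0 e1 where pbG: "pullback C g g G e0 e1"
    using assms(1) gD unfolding finitely_complete_def by blast
  have he0: "hom C e0 G Y" and he1: "hom C e1 G Y" and sqG: "Cmp C g e0 = Cmp C g e1"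
    using pb_homs[OF pbG] gD by auto
  obtain u0 where hu0: "hom C u0 Y G" and u0a: "Cmp C e0 u0 = Idt C Y" and u0b: "Cmp C e1 u0 = Idt C Y"
    using pb_ex[OF pbG, of "Idt C Y" Y "Idt C Y"] gD iY by auto
  have Bt: "sigma_relation C S Y G e0 e1 u0"
  proof -
    have "\<forall>R d0 d1 s0. pullback C g g R d0 d1 \<and> hom C s0 (Dom C g) R \<and>
        Cmp C d0 s0 = Idt C (Dom C g) \<and> Cmp C d1 s0 = Idt C (Dom C g)
        \<longrightarrow> sigma_relation C S (Dom C g) R d0 d1 s0" using assms(7) unfolding sigma_special_def by blast
    then show ?thesis using pbG hu0 u0a u0b gD(2) by metis
  qed
  have BS: "(e0, u0) \<in> S" using Bt unfolding sigma_relation_def by blast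
  have fib: "fibrational C S" using assms(2) point_congruous_def by blast
  have iYD: "Idt C Y \<in> Arr C" "Dom C (Idt C Y) = Y" "Cod C (Idt C Y) = Y" using homD[OF iY] by auto
  have iXD: "Idt C X \<in> Arr C" "Dom C (Idt C X) = X" "Cod C (Idt C X) = X" using homD[OF iX] by auto
  have iii: "Cmp C (Idt C Y) (Idt C Y) = Idt C Y" using idl[OF c iY] .
  have DS: "(Idt C Y, Idt C Y) \<in> S"
  proof -
    have "split_epi C (Idt C Y, Idt C Y)" using iY iYD iii by (simp add: split_epi_def)
    moreover have "iso C (Idt C Y)" using iY iYD iii unfolding iso_def by auto
    ultimately show ?thesis using fib unfolding fibrational_def by blast
  qed
  show ?thesis unfolding sigma_special_def
  proof (intro conjI allI impI)
    show "f \<in> Arr C" by fact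
    fix R d0 d1 s0
    assume H: "pullback C f f R d0 d1 \<and> hom C s0 (Dom C f) R \<and>
        Cmp C d0 s0 = Idt C (Dom C f) \<and> Cmp C d1 s0 = Idt C (Dom C f)"
    then have pbR: "pullback C f f R d0 d1" and hs0: "hom C s0 X R"
      and s0a: "Cmp C d0 s0 = Idt C X" and s0b: "Cmp C d1 s0 = Idt C X" using fD by auto
    have hd0: "hom C d0 R X" and hd1: "hom C d1 R X" and sqR: "Cmp C f d0 = Cmp C f d1"
      using pb_homs[OF pbR] fD by auto
    have jmR: "jointly_monic C d0 d1"
      unfolding jointly_monic_def
    proof (intro conjI allI impI)
      show "d0 \<in> Arr C" "d1 \<in> Arr C" "Dom C d0 = Dom C d1" using hd0 hd1 homD by metis+
      fix a b assume ab: "a \<in> Arr C \<and> b \<in> Arr C \<and> Dom C a = Dom C b \<and> Cod C a = Dom C d0 \<and>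
        Cod C b = Dom C d0 \<and> Cmp C d0 a = Cmp C d0 b \<and> Cmp C d1 a = Cmp C d1 b"
      have "hom C a (Dom C a) R" "hom C b (Dom C a) R" using ab homD[OF hd0] by (auto simp: hom_def)
      then show "a = b" using pb_uniq[OF pbR] ab c by blast
    qed
    have "Cmp C h d0 = Cmp C h d1"
      unfolding h_def using assoc[OF c hd0 hf hg] assoc[OF c hd1 hf hg] sqR by simp
    then obtain \<phi> where h\<phi>: "hom C \<phi> R K" and \<phi>a: "Cmp C k0 \<phi> = d0" and \<phi>b: "Cmp C k1 \<phi> = d1"
      using pb_ex[OF pbK, of d0 R d1] hd0 hd1 hD by auto
    have hfk0: "hom C (Cmp C f k0) K Y" using comp_hom[OF c hk0 hf] .
    have hfk1: "hom C (Cmp C f k1) K Y" using comp_hom[OF c hk1 hf] .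
    have "Cmp C g (Cmp C f k0) = Cmp C g (Cmp C f k1)"
      using assoc[OF c hk0 hf hg] assoc[OF c hk1 hf hg] sqK unfolding h_def by simp
    then obtain \<psi> where h\<psi>: "hom C \<psi> K G" and \<psi>a: "Cmp C e0 \<psi> = Cmp C f k0" and \<psi>b: "Cmp C e1 \<psi> = Cmp C f k1"
      using pb_ex[OF pbG, of "Cmp C f k0" K "Cmp C f k1"] hfk0 hfk1 gD by auto
    have k0D: "k0 \<in> Arr C" "Dom C k0 = K" "Cod C k0 = X" using homD[OF hk0] by auto
    have e0D: "e0 \<in> Arr C" "Dom C e0 = G" "Cod C e0 = Y" using homD[OF he0] by auto
    have d0D: "d0 \<in> Arr C" "Dom C d0 = R" "Cod C d0 = X" using homD[OF hd0] by auto
    have hfd0: "hom C (Cmp C f d0) R Y" using comp_hom[OF c hd0 hf] .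
    have seA: "split_epi C (k0, t0)" using k0D ht0 t0a by (simp add: split_epi_def)
    have seB: "split_epi C (e0, u0)" using e0D hu0 u0a by (simp add: split_epi_def)
    have seD: "split_epi C (Idt C Y, Idt C Y)" using iY iYD iii by (simp add: split_epi_def)
    have seP: "split_epi C (d0, s0)" using d0D hs0 s0a by (simp add: split_epi_def)
    have hut: "hom C (Cmp C \<psi> t0) X G" using comp_hom[OF c ht0 h\<psi>] .
    have huf: "hom C (Cmp C u0 f) X G" using comp_hom[OF c hf hu0] .
    have \<psi>t0: "Cmp C \<psi> t0 = Cmp C u0 f"
    proof (rule pb_uniq[OF pbG hut huf _ _ c])
      have "Cmp C e0 (Cmp C \<psi> t0) = Cmp C (Cmp C f k0) t0" using assoc[OF c ht0 h\<psi> he0] \<psi>a by metis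
      also have "\<dots> = f" using assoc[OF c ht0 hk0 hf] t0a idr[OF c hf] by metis
      also have "\<dots> = Cmp C e0 (Cmp C u0 f)" using assoc[OF c hf hu0 he0] u0a idl[OF c hf] by metis
      finally show "Cmp C e0 (Cmp C \<psi> t0) = Cmp C e0 (Cmp C u0 f)" .
      have "Cmp C e1 (Cmp C \<psi> t0) = Cmp C (Cmp C f k1) t0" using assoc[OF c ht0 h\<psi> he1] \<psi>b by metis
      also have "\<dots> = f" using assoc[OF c ht0 hk1 hf] t0b idr[OF c hf] by metis
      also have "\<dots> = Cmp C e1 (Cmp C u0 f)" using assoc[OF c hf hu0 he1] u0b idl[OF c hf] by metis
      finally show "Cmp C e1 (Cmp C \<psi> t0) = Cmp C e1 (Cmp C u0 f)" .
    qed
    have hps: "hom C (Cmp C \<phi> s0) X K" using comp_hom[OF c hs0 h\<phi>] .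
    have \<phi>s0: "Cmp C \<phi> s0 = Cmp C t0 (Idt C X)"
    proof -
      have "Cmp C \<phi> s0 = t0"
      proof (rule pb_uniq[OF pbK hps ht0 _ _ c])
        show "Cmp C k0 (Cmp C \<phi> s0) = Cmp C k0 t0" using assoc[OF c hs0 h\<phi> hk0] \<phi>a s0a t0a by metis
        show "Cmp C k1 (Cmp C \<phi> s0) = Cmp C k1 t0" using assoc[OF c hs0 h\<phi> hk1] \<phi>b s0b t0b by metis
      qed
      then show ?thesis using idr[OF c ht0] by metis
    qed
    have hpp: "hom C (Cmp C \<psi> \<phi>) R G" using comp_hom[OF c h\<phi> h\<psi>] .
    have hufd: "hom C (Cmp C u0 (Cmp C f d0)) R G" using comp_hom[OF c hfd0 hu0] .
    have \<psi>\<phi>: "Cmp C \<psi> \<phi> = Cmp C u0 (Cmp C f d0)"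
    proof (rule pb_uniq[OF pbG hpp hufd _ _ c])
      show "Cmp C e0 (Cmp C \<psi> \<phi>) = Cmp C e0 (Cmp C u0 (Cmp C f d0))"
      proof -
        have "Cmp C e0 (Cmp C \<psi> \<phi>) = Cmp C (Cmp C e0 \<psi>) \<phi>" by (rule assoc[OF c h\<phi> h\<psi> he0])
        also have "\<dots> = Cmp C (Cmp C f k0) \<phi>" by (simp only: \<psi>a)
        also have "\<dots> = Cmp C f (Cmp C k0 \<phi>)" by (rule assoc[OF c h\<phi> hk0 hf, symmetric])
        also have "\<dots> = Cmp C f d0" by (simp only: \<phi>a)
        also have "\<dots> = Cmp C (Cmp C e0 u0) (Cmp C f d0)" by (simp only: u0a idl[OF c hfd0])
        also have "\<dots> = Cmp C e0 (Cmp C u0 (Cmp C f d0))" by (rule assoc[OF c hfd0 hu0 he0, symmetric])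
        finally show ?thesis .
      qed
      show "Cmp C e1 (Cmp C \<psi> \<phi>) = Cmp C e1 (Cmp C u0 (Cmp C f d0))"
      proof -
        have "Cmp C e1 (Cmp C \<psi> \<phi>) = Cmp C (Cmp C e1 \<psi>) \<phi>" by (rule assoc[OF c h\<phi> h\<psi> he1])
        also have "\<dots> = Cmp C (Cmp C f k1) \<phi>" by (simp only: \<psi>b)
        also have "\<dots> = Cmp C f (Cmp C k1 \<phi>)" by (rule assoc[OF c h\<phi> hk1 hf, symmetric])
        also have "\<dots> = Cmp C f d0" by (simp only: \<phi>b sqR)
        also have "\<dots> = Cmp C (Cmp C e1 u0) (Cmp C f d0)" by (simp only: u0b idl[OF c hfd0])
        also have "\<dots> = Cmp C e1 (Cmp C u0 (Cmp C f d0))" by (rule assoc[OF c hfd0 hu0 he1, symmetric])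
        finally show ?thesis .
      qed
    qed
    define A where "A = (k0, t0)"
    define B where "B = (e0, u0)"
    define D where "D = (Idt C Y, Idt C Y)"
    define P0 where "P0 = (d0, s0)"
    define \<alpha> where "\<alpha> = (A, B, (\<psi>, f))"
    define \<beta> where "\<beta> = (D, B, (u0, Idt C Y))"
    define \<pi>1 where "\<pi>1 = (P0, A, (\<phi>, Idt C X))"
    define \<pi>2 where "\<pi>2 = (P0, D, (Cmp C f d0, f))"
    have \<alpha>A: "\<alpha> \<in> Arr (Pt C)"
      unfolding \<alpha>_def A_def B_def Pt_arr using seA seB k0D e0D h\<psi> hf \<psi>a \<psi>t0 by simp
    have \<beta>A: "\<beta> \<in> Arr (Pt C)"
      unfolding \<beta>_def D_def B_def Pt_arr using seD seB iYD e0D hu0 iY u0a idr[OF c hu0] iii by simp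
    have \<pi>1A: "\<pi>1 \<in> Arr (Pt C)"
      unfolding \<pi>1_def P0_def A_def Pt_arr using seP seA d0D k0D h\<phi> iX \<phi>a idl[OF c hd0] \<phi>s0 by simp
    have e\<pi>2: "Cmp C (Cmp C f d0) s0 = Cmp C (Idt C Y) f"
      using assoc[OF c hs0 hd0 hf] s0a idr[OF c hf] idl[OF c hf] by metis
    have \<pi>2A: "\<pi>2 \<in> Arr (Pt C)"
      unfolding \<pi>2_def P0_def D_def Pt_arr using seP seD d0D iYD hfd0 hf idl[OF c hfd0] e\<pi>2 by simp
    have comm: "Cmp (Pt C) \<alpha> \<pi>1 = Cmp (Pt C) \<beta> \<pi>2"
      unfolding \<alpha>_def \<beta>_def \<pi>1_def \<pi>2_def Pt_cmp using \<psi>\<phi> idr[OF c hf] idl[OF c hf] by simp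
    have PB: "pullback (Pt C) \<alpha> \<beta> P0 \<pi>1 \<pi>2"
      unfolding pullback_def
    proof (intro conjI allI impI)
      show "\<alpha> \<in> Arr (Pt C)" "\<beta> \<in> Arr (Pt C)" by fact+
      show "Cod (Pt C) \<alpha> = Cod (Pt C) \<beta>" unfolding Pt_cod \<alpha>_def \<beta>_def by simp
      show "hom (Pt C) \<pi>1 P0 (Dom (Pt C) \<alpha>)" unfolding hom_Pt Pt_dom using \<pi>1A \<pi>1_def \<alpha>_def by simp
      show "hom (Pt C) \<pi>2 P0 (Dom (Pt C) \<beta>)" unfolding hom_Pt Pt_dom using \<pi>2A \<pi>2_def \<beta>_def by simp
      show "Cmp (Pt C) \<alpha> \<pi>1 = Cmp (Pt C) \<beta> \<pi>2" by fact
      fix Q q1 q2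
      assume Hq: "hom (Pt C) q1 Q (Dom (Pt C) \<alpha>) \<and> hom (Pt C) q2 Q (Dom (Pt C) \<beta>) \<and>
        Cmp (Pt C) \<alpha> q1 = Cmp (Pt C) \<beta> q2"
      obtain qf qs where Qe: "Q = (qf, qs)" by fastforce
      obtain a1 b1 where q1e: "q1 = (Q, A, (a1, b1))"
      proof -
        have "q1 = (fst q1, fst (snd q1), fst (snd (snd q1)), snd (snd (snd q1)))" by simp
        then show ?thesis using that[of "fst (snd (snd q1))" "snd (snd (snd q1))"] Hq unfolding hom_Pt Pt_dom \<alpha>_def by simp
      qed
      obtain a2 b2 where q2e: "q2 = (Q, D, (a2, b2))"
      proof -
        have "q2 = (fst q2, fst (snd q2), fst (snd (snd q2)), snd (snd (snd q2)))" by simp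
        then show ?thesis using that[of "fst (snd (snd q2))" "snd (snd (snd q2))"] Hq unfolding hom_Pt Pt_dom \<beta>_def by simp
      qed
      define W where "W = Dom C qf"
      define V where "V = Cod C qf"
      have q1A: "q1 \<in> Arr (Pt C)" and q2A: "q2 \<in> Arr (Pt C)" using Hq hom_Pt by blast+
      have seQ: "split_epi C (qf, qs)" and ha1: "hom C a1 W K" and hb1: "hom C b1 V X"
        and a1e: "Cmp C k0 a1 = Cmp C b1 qf" and a1s: "Cmp C a1 qs = Cmp C t0 b1"
        using q1A unfolding q1e Qe A_def Pt_arr W_def V_def using k0D by auto
      have ha2: "hom C a2 W Y" and hb2: "hom C b2 V Y"
        and a2e: "Cmp C (Idt C Y) a2 = Cmp C b2 qf" and a2s: "Cmp C a2 qs = Cmp C (Idt C Y) b2"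
        using q2A unfolding q2e Qe D_def Pt_arr W_def V_def using iYD by auto
      have hqf: "hom C qf W V" and hqs: "hom C qs V W" and qfs: "Cmp C qf qs = Idt C V"
        using seQ unfolding split_epi_def W_def V_def hom_def by auto
      have eqs: "Cmp C \<psi> a1 = Cmp C u0 a2" "Cmp C f b1 = Cmp C (Idt C Y) b2"
        using Hq unfolding q1e q2e \<alpha>_def \<beta>_def Pt_cmp by auto
      have fb1: "Cmp C f b1 = b2" using eqs(2) idl[OF c hb2] by simp
      have hka0: "hom C (Cmp C k0 a1) W X" using comp_hom[OF c ha1 hk0] .
      have hka1: "hom C (Cmp C k1 a1) W X" using comp_hom[OF c ha1 hk1] .
      have fk0a: "Cmp C f (Cmp C k0 a1) = a2"
      proof -
        have "Cmp C f (Cmp C k0 a1) = Cmp C e0 (Cmp C \<psi> a1)"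
          using assoc[OF c ha1 hk0 hf] assoc[OF c ha1 h\<psi> he0] \<psi>a by metis
        also have "\<dots> = a2" using eqs(1) assoc[OF c ha2 hu0 he0] u0a idl[OF c ha2] by metis
        finally show ?thesis .
      qed
      have fk1a: "Cmp C f (Cmp C k1 a1) = a2"
      proof -
        have "Cmp C f (Cmp C k1 a1) = Cmp C e1 (Cmp C \<psi> a1)"
          using assoc[OF c ha1 hk1 hf] assoc[OF c ha1 h\<psi> he1] \<psi>b by metis
        also have "\<dots> = a2" using eqs(1) assoc[OF c ha2 hu0 he1] u0b idl[OF c ha2] by metis
        finally show ?thesis .
      qed
      obtain cc where hcc: "hom C cc W R" and cc0: "Cmp C d0 cc = Cmp C k0 a1"
        and cc1: "Cmp C d1 cc = Cmp C k1 a1"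
        using pb_ex[OF pbR hka0[folded fD(2)] hka1[folded fD(2)]] fk0a fk1a by auto
      have \<phi>cc: "Cmp C \<phi> cc = a1"
      proof (rule pb_uniq[OF pbK comp_hom[OF c hcc h\<phi>] ha1 _ _ c])
        show "Cmp C k0 (Cmp C \<phi> cc) = Cmp C k0 a1" using assoc[OF c hcc h\<phi> hk0] \<phi>a cc0 by metis
        show "Cmp C k1 (Cmp C \<phi> cc) = Cmp C k1 a1" using assoc[OF c hcc h\<phi> hk1] \<phi>b cc1 by metis
      qed
      have ccs: "Cmp C cc qs = Cmp C s0 b1"
      proof (rule pb_uniq[OF pbR comp_hom[OF c hqs hcc] comp_hom[OF c hb1 hs0] _ _ c])
        show "Cmp C d0 (Cmp C cc qs) = Cmp C d0 (Cmp C s0 b1)"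
        proof -
          have "Cmp C d0 (Cmp C cc qs) = Cmp C (Cmp C d0 cc) qs" by (rule assoc[OF c hqs hcc hd0])
          also have "\<dots> = Cmp C (Cmp C k0 a1) qs" by (simp only: cc0)
          also have "\<dots> = Cmp C k0 (Cmp C a1 qs)" by (rule assoc[OF c hqs ha1 hk0, symmetric])
          also have "\<dots> = Cmp C k0 (Cmp C t0 b1)" by (simp only: a1s)
          also have "\<dots> = Cmp C (Cmp C k0 t0) b1" by (rule assoc[OF c hb1 ht0 hk0])
          also have "\<dots> = b1" by (simp only: t0a idl[OF c hb1])
          also have "\<dots> = Cmp C (Cmp C d0 s0) b1" by (simp only: s0a idl[OF c hb1])
          also have "\<dots> = Cmp C d0 (Cmp C s0 b1)" by (rule assoc[OF c hb1 hs0 hd0, symmetric])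
          finally show ?thesis .
        qed
        show "Cmp C d1 (Cmp C cc qs) = Cmp C d1 (Cmp C s0 b1)"
        proof -
          have "Cmp C d1 (Cmp C cc qs) = Cmp C (Cmp C d1 cc) qs" by (rule assoc[OF c hqs hcc hd1])
          also have "\<dots> = Cmp C (Cmp C k1 a1) qs" by (simp only: cc1)
          also have "\<dots> = Cmp C k1 (Cmp C a1 qs)" by (rule assoc[OF c hqs ha1 hk1, symmetric])
          also have "\<dots> = Cmp C k1 (Cmp C t0 b1)" by (simp only: a1s)
          also have "\<dots> = Cmp C (Cmp C k1 t0) b1" by (rule assoc[OF c hb1 ht0 hk1])
          also have "\<dots> = b1" by (simp only: t0b idl[OF c hb1])
          also have "\<dots> = Cmp C (Cmp C d1 s0) b1" by (simp only: s0b idl[OF c hb1])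
          also have "\<dots> = Cmp C d1 (Cmp C s0 b1)" by (rule assoc[OF c hb1 hs0 hd1, symmetric])
          finally show ?thesis .
        qed
      qed
      define u where "u = (Q, P0, (cc, b1))"
      have uA: "u \<in> Arr (Pt C)"
        unfolding u_def Qe P0_def Pt_arr using seQ seP hcc hb1 d0D cc0 a1e ccs
        unfolding W_def V_def by simp
      have up1: "Cmp (Pt C) \<pi>1 u = q1"
        unfolding u_def \<pi>1_def q1e Pt_cmp using \<phi>cc idl[OF c hb1] by simp
      have up2: "Cmp (Pt C) \<pi>2 u = q2"
        unfolding u_def \<pi>2_def q2e Pt_cmp using assoc[OF c hcc hd0 hf] cc0 fk0a fb1 by simp
      show "\<exists>!u. hom (Pt C) u Q P0 \<and> Cmp (Pt C) \<pi>1 u = q1 \<and> Cmp (Pt C) \<pi>2 u = q2"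
      proof (rule ex1I[of _ u])
        show "hom (Pt C) u Q P0 \<and> Cmp (Pt C) \<pi>1 u = q1 \<and> Cmp (Pt C) \<pi>2 u = q2"
          using uA up1 up2 unfolding hom_Pt u_def by simp
        fix v assume v: "hom (Pt C) v Q P0 \<and> Cmp (Pt C) \<pi>1 v = q1 \<and> Cmp (Pt C) \<pi>2 v = q2"
        obtain cv bv where ve: "v = (Q, P0, (cv, bv))"
        proof -
          have "v = (fst v, fst (snd v), fst (snd (snd v)), snd (snd (snd v)))" by simp
          then show ?thesis using that[of "fst (snd (snd v))" "snd (snd (snd v))"] v unfolding hom_Pt by simp
        qed
        have hcv: "hom C cv W R" and hbv: "hom C bv V X"
          using v unfolding ve hom_Pt Qe P0_def Pt_arr W_def V_def using d0D by auto
        have "Cmp C \<phi> cv = a1" "Cmp C (Idt C X) bv = b1"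
          using v unfolding ve \<pi>1_def q1e Pt_cmp by auto
        then have bv: "bv = b1" and pcv: "Cmp C \<phi> cv = a1" using idl[OF c hbv] by auto
        have "cv = cc"
        proof (rule pb_uniq[OF pbR hcv hcc _ _ c])
          show "Cmp C d0 cv = Cmp C d0 cc" using assoc[OF c hcv h\<phi> hk0] \<phi>a pcv cc0 by metis
          show "Cmp C d1 cv = Cmp C d1 cc" using assoc[OF c hcv h\<phi> hk1] \<phi>b pcv cc1 by metis
        qed
        then show "v = u" using ve bv u_def by simp
      qed
    qed
    have PC: "\<forall>\<alpha> \<beta> P \<pi>1 \<pi>2. pullback (Pt C) \<alpha> \<beta> P \<pi>1 \<pi>2 \<and>
        Dom (Pt C) \<alpha> \<in> S \<and> Dom (Pt C) \<beta> \<in> S \<and> Cod (Pt C) \<alpha> \<in> S \<longrightarrow> P \<in> S"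
      using assms(2) unfolding point_congruous_def by blast
    have "Dom (Pt C) \<alpha> \<in> S" "Dom (Pt C) \<beta> \<in> S" "Cod (Pt C) \<alpha> \<in> S"
      unfolding Pt_dom Pt_cod \<alpha>_def \<beta>_def A_def B_def D_def using AS BS DS by simp_all
    then have "P0 \<in> S" using PC PB by blast
    then have PS: "(d0, s0) \<in> S" unfolding P0_def .
    show "sigma_relation C S (Dom C f) R d0 d1 s0"
      unfolding sigma_relation_def fD(2) using hd0 hd1 jmR hs0 s0a s0b PS by simp
  qed
qed

end
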